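(* Let $\gamma>0$, $s_0=2$, $s\geq s_0$, and let $u$ be a sufficiently regular function supported in $\mathcal{K}=\{(t,x):|x|\leq t-1\}$ solving the wave equation $-\Box u=f$ on $\mathcal{K}_{[s_0,s]}$. Then \[ \int_{\mathcal{H}_s}(t-r)^{-\gamma}(s/t)^2|\partial u|^2\,dx\leq 2E(s_0,u)+4\int_{s_0}^s\int_{\mathcal{H}_{s'}}(s'/t)(t-r)^{-\gamma} f\,\partial_t u\,dx\,ds'. \]
   Context: Signature $(-,+,+)$, $\Box=-\partial_t^2+\partial_1^2+\partial_2^2$, $r=|x|$. $\mathcal{H}_s=\{(t,x):t^2=|x|^2+s^2\}$ and $\mathcal{K}_{[s_0,s]}=\{(t,x): s_0^2\leq t^2-r^2\leq s^2,\ r\leq t-1\}$. For a function $\phi$, $\int_{\mathcal{H}_s}\phi\,dx:=\int_{\mathbb{R}^2}\phi(\sqrt{s^2+|x|^2},x)\,dx$ (so in the integrand, $t=\sqrt{s^2+|x|^2}$, resp. $t=\sqrt{s'^2+|x|^2}$). $|\partial u|^2=\sum_{\alpha=0}^2(\partial_\alpha u)^2$. The energy is $E(s,u)=\int_{\mathcal{H}_s}\big((\partial_t u)^2+\sum_a(\partial_a u)^2+2(x^a/t)\partial_a u\,\partial_t u\big)dx$. *)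

theory Defs
  imports "HOL-Analysis.Analysis"
begin

text \<open>Points of spacetime are written (t, x) with t :: real and x :: real \<times> real.
  Index 0 is time, indices 1, 2 are the spatial coordinates.\<close>

definition coord :: "nat \<Rightarrow> real \<Rightarrow> real \<times> real \<Rightarrow> real" where
  "coord i t x = (if i = 0 then t else if i = 1 then fst x else snd x)"

definition line :: "nat \<Rightarrow> (real \<Rightarrow> real \<times> real \<Rightarrow> real) \<Rightarrow> real \<Rightarrow> real \<times> real \<Rightarrow> real \<Rightarrow> real" where
  "line i u t x = (\<lambda>y. if i = 0 then u y x else if i = 1 then u t (y, snd x) else u t (fst x, y))"

definition pd :: "nat \<Rightarrow> (real \<Rightarrow> real \<times> real \<Rightarrow> real) \<Rightarrow> real \<Rightarrow> real \<times> real \<Rightarrow> real" where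
  "pd i u t x = deriv (line i u t x) (coord i t x)"

definition C1_reg :: "(real \<Rightarrow> real \<times> real \<Rightarrow> real) \<Rightarrow> bool" where
  "C1_reg u \<longleftrightarrow> continuous_on UNIV (\<lambda>p. u (fst p) (snd p))
     \<and> (\<forall>i<3. \<forall>t x. line i u t x differentiable (at (coord i t x)))
     \<and> (\<forall>i<3. continuous_on UNIV (\<lambda>p. pd i u (fst p) (snd p)))"

definition C2_reg :: "(real \<Rightarrow> real \<times> real \<Rightarrow> real) \<Rightarrow> bool" where
  "C2_reg u \<longleftrightarrow> C1_reg u \<and> (\<forall>i<3. C1_reg (pd i u))"

definition wave_box :: "(real \<Rightarrow> real \<times> real \<Rightarrow> real) \<Rightarrow> real \<Rightarrow> real \<times> real \<Rightarrow> real" where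
  "wave_box u t x = - pd 0 (pd 0 u) t x + pd 1 (pd 1 u) t x + pd 2 (pd 2 u) t x"

definition grad_sq :: "(real \<Rightarrow> real \<times> real \<Rightarrow> real) \<Rightarrow> real \<Rightarrow> real \<times> real \<Rightarrow> real" where
  "grad_sq u t x = (\<Sum>i<3. (pd i u t x)\<^sup>2)"

definition K_region :: "real \<Rightarrow> real \<Rightarrow> (real \<times> (real \<times> real)) set" where
  "K_region s0 s = {(t, x). s0\<^sup>2 \<le> t\<^sup>2 - (norm x)\<^sup>2 \<and> t\<^sup>2 - (norm x)\<^sup>2 \<le> s\<^sup>2 \<and> norm x \<le> t - 1}"

definition hyp_t :: "real \<Rightarrow> real \<times> real \<Rightarrow> real" where
  "hyp_t s x = sqrt (s\<^sup>2 + (norm x)\<^sup>2)"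

definition energy :: "real \<Rightarrow> (real \<Rightarrow> real \<times> real \<Rightarrow> real) \<Rightarrow> real" where
  "energy s u = (\<integral>x. (let t = hyp_t s x in
      (pd 0 u t x)\<^sup>2 + (pd 1 u t x)\<^sup>2 + (pd 2 u t x)\<^sup>2
      + 2 * ((fst x / t) * pd 1 u t x * pd 0 u t x + (snd x / t) * pd 2 u t x * pd 0 u t x)) \<partial>lborel)"

end

theory Submission
  imports Defs "HOL-Analysis.Analysis"
begin

lemma pd0_D:
  assumes "C1_reg g"
  shows "((\<lambda>y. g y x) has_real_derivative pd 0 g t x) (at t)"
proof -
  have "line 0 g t x differentiable (at (coord 0 t x))" using assms unfolding C1_reg_def by (cases x) auto
  then have "(line 0 g t x has_real_derivative deriv (line 0 g t x) (coord 0 t x)) (at (coord 0 t x))"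
    using DERIV_deriv_iff_real_differentiable by blast
  then show ?thesis unfolding pd_def by (simp add: line_def coord_def)
qed

lemma pd1_D:
  assumes "C1_reg g"
  shows "((\<lambda>y. g t (y, c)) has_real_derivative pd 1 g t (y0, c)) (at y0)"
proof -
  have "line 1 g t (y0,c) differentiable (at (coord 1 t (y0,c)))" using assms unfolding C1_reg_def by auto
  then have "(line 1 g t (y0,c) has_real_derivative deriv (line 1 g t (y0,c)) (coord 1 t (y0,c))) (at (coord 1 t (y0,c)))"
    using DERIV_deriv_iff_real_differentiable by blast
  then show ?thesis unfolding pd_def by (simp add: line_def coord_def)
qed

lemma pd2_D:
  assumes "C1_reg g"
  shows "((\<lambda>y. g t (c, y)) has_real_derivative pd 2 g t (c, y0)) (at y0)"
proof -
  have "line 2 g t (c,y0) differentiable (at (coord 2 t (c,y0)))" using assms unfolding C1_reg_def by auto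
  then have "(line 2 g t (c,y0) has_real_derivative deriv (line 2 g t (c,y0)) (coord 2 t (c,y0))) (at (coord 2 t (c,y0)))"
    using DERIV_deriv_iff_real_differentiable by blast
  then show ?thesis unfolding pd_def by (simp add: line_def coord_def)
qed

lemma pd_cont:
  assumes "C1_reg g" "i < 3"
  shows "continuous_on UNIV (\<lambda>p. pd i g (fst p) (snd p))"
  using assms unfolding C1_reg_def by auto

lemma g_cont:
  assumes "C1_reg g"
  shows "continuous_on UNIV (\<lambda>p. g (fst p) (snd p))"
  using assms unfolding C1_reg_def by auto

lemma cont_comp2:
  assumes "continuous_on UNIV (\<lambda>p. F (fst p) (snd p))" "continuous_on S \<phi>" "continuous_on S \<psi>"
  shows "continuous_on S (\<lambda>z. F (\<phi> z) (\<psi> z))"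
proof -
  have "continuous_on S (\<lambda>z. (\<phi> z, \<psi> z))" using assms(2,3) by (intro continuous_intros)
  from continuous_on_compose2[OF assms(1) this] show ?thesis by simp
qed

lemma J1:
  assumes "C1_reg g"
  shows "((\<lambda>(t,y). g t (y,c)) has_derivative (\<lambda>(dt,dy). pd 0 g t0 (y0,c) * dt + pd 1 g t0 (y0,c) * dy)) (at (t0,y0))"
proof -
  have fx: "((\<lambda>t. g t (y0,c)) has_derivative (\<lambda>dt. pd 0 g t0 (y0,c) * dt)) (at t0 within UNIV)"
    using pd0_D[OF assms, of "(y0,c)" t0] by (simp add: has_field_derivative_def)
  have fy: "((\<lambda>y. g t (y,c)) has_derivative blinfun_apply (blinfun_mult_right (pd 1 g t (y,c)))) (at y within UNIV)" for t y
    using pd1_D[OF assms, of t c y] by (simp add: has_field_derivative_def mult.commute)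
  have c1: "continuous_on UNIV (\<lambda>p. pd 1 g (fst p) (snd p))" using pd_cont[OF assms, of 1] by simp
  have cc: "continuous (at (t0, y0) within UNIV \<times> UNIV) (\<lambda>(t, y). blinfun_mult_right (pd 1 g t (y,c)))"
  proof -
    have "continuous (at (t0,y0)) (\<lambda>p::real\<times>real. pd 1 g (fst p) (snd p, c))"
    proof -
      have "continuous_on UNIV (\<lambda>p::real\<times>real. pd 1 g (fst p) (snd p, c))"
        by (rule cont_comp2[OF c1]) (auto intro!: continuous_intros)
      then show ?thesis by (simp add: continuous_on_eq_continuous_at)
    qed
    then have "continuous (at (t0,y0)) (\<lambda>p::real\<times>real. blinfun_mult_right (pd 1 g (fst p) (snd p, c)))"
      by (rule bounded_linear.continuous[OF bounded_linear_blinfun_mult_right])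
    then show ?thesis by (simp add: case_prod_beta')
  qed
  have "((\<lambda>(t, y). g t (y,c)) has_derivative (\<lambda>(tx, ty). pd 0 g t0 (y0,c) * tx + blinfun_mult_right (pd 1 g t0 (y0,c)) ty)) (at (t0, y0) within UNIV \<times> UNIV)"
    by (rule has_derivative_partialsI[OF fx fy cc]) auto
  then show ?thesis by (simp add: mult.commute)
qed

lemma J2:
  assumes "C1_reg g"
  shows "((\<lambda>(t,y). g t (c,y)) has_derivative (\<lambda>(dt,dy). pd 0 g t0 (c,y0) * dt + pd 2 g t0 (c,y0) * dy)) (at (t0,y0))"
proof -
  have fx: "((\<lambda>t. g t (c,y0)) has_derivative (\<lambda>dt. pd 0 g t0 (c,y0) * dt)) (at t0 within UNIV)"
    using pd0_D[OF assms, of "(c,y0)" t0] by (simp add: has_field_derivative_def)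
  have fy: "((\<lambda>y. g t (c,y)) has_derivative blinfun_apply (blinfun_mult_right (pd 2 g t (c,y)))) (at y within UNIV)" for t y
    using pd2_D[OF assms, of t c y] by (simp add: has_field_derivative_def mult.commute)
  have c1: "continuous_on UNIV (\<lambda>p. pd 2 g (fst p) (snd p))" using pd_cont[OF assms, of 2] by simp
  have cc: "continuous (at (t0, y0) within UNIV \<times> UNIV) (\<lambda>(t, y). blinfun_mult_right (pd 2 g t (c,y)))"
  proof -
    have "continuous (at (t0,y0)) (\<lambda>p::real\<times>real. pd 2 g (fst p) (c, snd p))"
    proof -
      have "continuous_on UNIV (\<lambda>p::real\<times>real. pd 2 g (fst p) (c, snd p))"
        by (rule cont_comp2[OF c1]) (auto intro!: continuous_intros)
      then show ?thesis by (simp add: continuous_on_eq_continuous_at)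
    qed
    then have "continuous (at (t0,y0)) (\<lambda>p::real\<times>real. blinfun_mult_right (pd 2 g (fst p) (c, snd p)))"
      by (rule bounded_linear.continuous[OF bounded_linear_blinfun_mult_right])
    then show ?thesis by (simp add: case_prod_beta')
  qed
  have "((\<lambda>(t, y). g t (c,y)) has_derivative (\<lambda>(tx, ty). pd 0 g t0 (c,y0) * tx + blinfun_mult_right (pd 2 g t0 (c,y0)) ty)) (at (t0, y0) within UNIV \<times> UNIV)"
    by (rule has_derivative_partialsI[OF fx fy cc]) auto
  then show ?thesis by (simp add: mult.commute)
qed


lemma chain1:
  assumes "C1_reg g" "(\<tau> has_real_derivative \<tau>') (at y0)"
  shows "((\<lambda>y. g (\<tau> y) (y,c)) has_real_derivative pd 0 g (\<tau> y0) (y0,c) * \<tau>' + pd 1 g (\<tau> y0) (y0,c)) (at y0)"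
proof -
  have d: "((\<lambda>y. (\<tau> y, y)) has_derivative (\<lambda>h. (\<tau>' * h, h))) (at y0)"
    using assms(2) by (auto simp: has_field_derivative_def intro!: derivative_eq_intros)
  have "((\<lambda>y. (\<lambda>(t,y). g t (y,c)) (\<tau> y, y)) has_derivative
     (\<lambda>h. (\<lambda>(dt,dy). pd 0 g (\<tau> y0) (y0,c) * dt + pd 1 g (\<tau> y0) (y0,c) * dy) (\<tau>' * h, h))) (at y0)"
    by (rule has_derivative_compose[OF d J1[OF assms(1)]])
  then have "((\<lambda>y. g (\<tau> y) (y,c)) has_derivative (\<lambda>h. pd 0 g (\<tau> y0) (y0,c) * (\<tau>' * h) + pd 1 g (\<tau> y0) (y0,c) * h)) (at y0)" by simp
  then show ?thesis unfolding has_field_derivative_def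
    by (rule has_derivative_eq_rhs) (rule ext, simp add: algebra_simps)
qed

lemma chain2:
  assumes "C1_reg g" "(\<tau> has_real_derivative \<tau>') (at y0)"
  shows "((\<lambda>y. g (\<tau> y) (c,y)) has_real_derivative pd 0 g (\<tau> y0) (c,y0) * \<tau>' + pd 2 g (\<tau> y0) (c,y0)) (at y0)"
proof -
  have d: "((\<lambda>y. (\<tau> y, y)) has_derivative (\<lambda>h. (\<tau>' * h, h))) (at y0)"
    using assms(2) by (auto simp: has_field_derivative_def intro!: derivative_eq_intros)
  have "((\<lambda>y. (\<lambda>(t,y). g t (c,y)) (\<tau> y, y)) has_derivative
     (\<lambda>h. (\<lambda>(dt,dy). pd 0 g (\<tau> y0) (c,y0) * dt + pd 2 g (\<tau> y0) (c,y0) * dy) (\<tau>' * h, h))) (at y0)"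
    by (rule has_derivative_compose[OF d J2[OF assms(1)]])
  then have "((\<lambda>y. g (\<tau> y) (c,y)) has_derivative (\<lambda>h. pd 0 g (\<tau> y0) (c,y0) * (\<tau>' * h) + pd 2 g (\<tau> y0) (c,y0) * h)) (at y0)" by simp
  then show ?thesis unfolding has_field_derivative_def
    by (rule has_derivative_eq_rhs) (rule ext, simp add: algebra_simps)
qed

lemma chain0:
  assumes "C1_reg g" "(\<tau> has_real_derivative \<tau>') (at s0)"
  shows "((\<lambda>s. g (\<tau> s) x) has_real_derivative pd 0 g (\<tau> s0) x * \<tau>') (at s0)"
  using DERIV_chain2[OF pd0_D[OF assms(1)] assms(2)] .

lemma abs_aux: "\<bar>A - a\<bar> < \<bar>a - b\<bar> / 2 \<Longrightarrow> \<bar>A - b\<bar> < \<bar>a - b\<bar> / 2 \<Longrightarrow> False" for A a b :: real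
  by (auto simp: abs_if split: if_splits)

lemma clairaut:
  fixes H Hx Hy Hxy Hyx :: "real \<Rightarrow> real \<Rightarrow> real"
  assumes dx: "\<And>x y. ((\<lambda>x. H x y) has_real_derivative Hx x y) (at x)"
      and dy: "\<And>x y. ((\<lambda>y. H x y) has_real_derivative Hy x y) (at y)"
      and dxy: "\<And>x y. ((\<lambda>y. Hx x y) has_real_derivative Hxy x y) (at y)"
      and dyx: "\<And>x y. ((\<lambda>x. Hy x y) has_real_derivative Hyx x y) (at x)"
      and c1: "continuous_on UNIV (\<lambda>p. Hxy (fst p) (snd p))"
      and c2: "continuous_on UNIV (\<lambda>p. Hyx (fst p) (snd p))"
  shows "Hxy x0 y0 = Hyx x0 y0"
proof -
  have key: "\<exists>\<xi> \<eta> \<xi>' \<eta>'. \<bar>\<xi>-x0\<bar> < h \<and> \<bar>\<eta>-y0\<bar> < h \<and> \<bar>\<xi>'-x0\<bar> < h \<and> \<bar>\<eta>'-y0\<bar> < h \<and> Hxy \<xi> \<eta> = Hyx \<xi>' \<eta>'"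
    if h: "h > 0" for h
  proof -
    define D where "D = H (x0+h) (y0+h) - H (x0+h) y0 - H x0 (y0+h) + H x0 y0"
    obtain \<xi> where \<xi>: "x0 < \<xi>" "\<xi> < x0+h"
      "(H (x0+h) (y0+h) - H (x0+h) y0) - (H x0 (y0+h) - H x0 y0) = (x0+h-x0) * (Hx \<xi> (y0+h) - Hx \<xi> y0)"
      using MVT2[of x0 "x0+h" "\<lambda>x. H x (y0+h) - H x y0" "\<lambda>x. Hx x (y0+h) - Hx x y0"] h DERIV_diff[OF dx dx]
      by auto
    obtain \<eta> where \<eta>: "y0 < \<eta>" "\<eta> < y0+h" "Hx \<xi> (y0+h) - Hx \<xi> y0 = (y0+h-y0) * Hxy \<xi> \<eta>"
      using MVT2[of y0 "y0+h" "\<lambda>y. Hx \<xi> y" "\<lambda>y. Hxy \<xi> y"] h dxy by auto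
    obtain \<eta>' where \<eta>': "y0 < \<eta>'" "\<eta>' < y0+h"
      "(H (x0+h) (y0+h) - H x0 (y0+h)) - (H (x0+h) y0 - H x0 y0) = (y0+h-y0) * (Hy (x0+h) \<eta>' - Hy x0 \<eta>')"
      using MVT2[of y0 "y0+h" "\<lambda>y. H (x0+h) y - H x0 y" "\<lambda>y. Hy (x0+h) y - Hy x0 y"] h DERIV_diff[OF dy dy]
      by auto
    obtain \<xi>' where \<xi>': "x0 < \<xi>'" "\<xi>' < x0+h" "Hy (x0+h) \<eta>' - Hy x0 \<eta>' = (x0+h-x0) * Hyx \<xi>' \<eta>'"
      using MVT2[of x0 "x0+h" "\<lambda>x. Hy x \<eta>'" "\<lambda>x. Hyx x \<eta>'"] h dyx by auto
    have "D = h * (h * Hxy \<xi> \<eta>)" using \<xi>(3) \<eta>(3) unfolding D_def by (simp add: algebra_simps)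
    moreover have "D = h * (h * Hyx \<xi>' \<eta>')" using \<xi>'(3) \<eta>'(3) unfolding D_def by (simp add: algebra_simps)
    ultimately have "Hxy \<xi> \<eta> = Hyx \<xi>' \<eta>'" using h by simp
    then show ?thesis using \<xi> \<eta> \<xi>' \<eta>' by (intro exI[of _ \<xi>] exI[of _ \<eta>] exI[of _ \<xi>'] exI[of _ \<eta>']) auto
  qed
  show ?thesis
  proof (rule ccontr)
    assume ne: "Hxy x0 y0 \<noteq> Hyx x0 y0"
    define e where "e = \<bar>Hxy x0 y0 - Hyx x0 y0\<bar> / 2"
    have e: "e > 0" using ne by (simp add: e_def)
    have "continuous (at (x0,y0)) (\<lambda>p. Hxy (fst p) (snd p))" using c1 by (simp add: continuous_on_eq_continuous_at)
    then obtain d1 where d1: "d1 > 0" "\<And>p. dist p (x0,y0) < d1 \<Longrightarrow> dist (Hxy (fst p) (snd p)) (Hxy x0 y0) < e"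
      unfolding continuous_at_eps_delta using e by fastforce
    have "continuous (at (x0,y0)) (\<lambda>p. Hyx (fst p) (snd p))" using c2 by (simp add: continuous_on_eq_continuous_at)
    then obtain d2 where d2: "d2 > 0" "\<And>p. dist p (x0,y0) < d2 \<Longrightarrow> dist (Hyx (fst p) (snd p)) (Hyx x0 y0) < e"
      unfolding continuous_at_eps_delta using e by fastforce
    define h where "h = min d1 d2 / 2"
    have h: "h > 0" using d1 d2 by (simp add: h_def)
    obtain \<xi> \<eta> \<xi>' \<eta>' where pts: "\<bar>\<xi>-x0\<bar> < h" "\<bar>\<eta>-y0\<bar> < h" "\<bar>\<xi>'-x0\<bar> < h" "\<bar>\<eta>'-y0\<bar> < h" "Hxy \<xi> \<eta> = Hyx \<xi>' \<eta>'"
      using key[OF h] by blast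
    have dd: "dist (a,b) (x0,y0) < min d1 d2" if "\<bar>a-x0\<bar> < h" "\<bar>b-y0\<bar> < h" for a b
    proof -
      have "dist (a,b) (x0,y0) = sqrt ((dist a x0)\<^sup>2 + (dist b y0)\<^sup>2)" by (simp add: dist_Pair_Pair)
      also have "\<dots> \<le> \<bar>dist a x0\<bar> + \<bar>dist b y0\<bar>" by (rule sqrt_sum_squares_le_sum_abs)
      also have "\<dots> < min d1 d2" using that by (simp add: dist_real_def h_def)
      finally show ?thesis .
    qed
    have "dist (Hxy \<xi> \<eta>) (Hxy x0 y0) < e" using d1(2)[of "(\<xi>,\<eta>)"] dd[OF pts(1,2)] by simp
    moreover have "dist (Hyx \<xi>' \<eta>') (Hyx x0 y0) < e" using d2(2)[of "(\<xi>',\<eta>')"] dd[OF pts(3,4)] by simp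
    ultimately show False using pts(5) unfolding e_def dist_real_def using abs_aux by metis
  qed
qed

lemma C2_C1: "C2_reg u \<Longrightarrow> C1_reg u" by (simp add: C2_reg_def)
lemma C2_C1d: "C2_reg u \<Longrightarrow> i < 3 \<Longrightarrow> C1_reg (pd i u)" by (simp add: C2_reg_def)

lemma sym01:
  assumes "C2_reg u"
  shows "pd 1 (pd 0 u) t x = pd 0 (pd 1 u) t x"
proof -
  obtain y c where x: "x = (y,c)" by (cases x)
  have u: "C1_reg u" and u0: "C1_reg (pd 0 u)" and u1: "C1_reg (pd 1 u)" using assms by (auto simp: C2_reg_def)
  have "pd 1 (pd 0 u) t (y,c) = pd 0 (pd 1 u) t (y,c)"
  proof (rule clairaut[where H="\<lambda>t y. u t (y,c)" and Hx="\<lambda>t y. pd 0 u t (y,c)" and Hy="\<lambda>t y. pd 1 u t (y,c)"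
        and Hxy="\<lambda>t y. pd 1 (pd 0 u) t (y,c)" and Hyx="\<lambda>t y. pd 0 (pd 1 u) t (y,c)"])
    show "((\<lambda>x. u x (y', c)) has_real_derivative pd 0 u x' (y', c)) (at x')" for x' y' by (rule pd0_D[OF u])
    show "((\<lambda>y. u x' (y, c)) has_real_derivative pd 1 u x' (y', c)) (at y')" for x' y' by (rule pd1_D[OF u])
    show "((\<lambda>y. pd 0 u x' (y, c)) has_real_derivative pd 1 (pd 0 u) x' (y', c)) (at y')" for x' y' by (rule pd1_D[OF u0])
    show "((\<lambda>x. pd 1 u x (y', c)) has_real_derivative pd 0 (pd 1 u) x' (y', c)) (at x')" for x' y' by (rule pd0_D[OF u1])
    show "continuous_on UNIV (\<lambda>p. pd 1 (pd 0 u) (fst p) (snd p, c))"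
      by (rule cont_comp2[OF pd_cont[OF u0]]) (auto intro!: continuous_intros)
    show "continuous_on UNIV (\<lambda>p. pd 0 (pd 1 u) (fst p) (snd p, c))"
      by (rule cont_comp2[OF pd_cont[OF u1]]) (auto intro!: continuous_intros)
  qed
  then show ?thesis using x by simp
qed

lemma sym02:
  assumes "C2_reg u"
  shows "pd 2 (pd 0 u) t x = pd 0 (pd 2 u) t x"
proof -
  obtain y c where x: "x = (c,y)" by (cases x)
  have u: "C1_reg u" and u0: "C1_reg (pd 0 u)" and u1: "C1_reg (pd 2 u)" using assms by (auto simp: C2_reg_def)
  have "pd 2 (pd 0 u) t (c,y) = pd 0 (pd 2 u) t (c,y)"
  proof (rule clairaut[where H="\<lambda>t y. u t (c,y)" and Hx="\<lambda>t y. pd 0 u t (c,y)" and Hy="\<lambda>t y. pd 2 u t (c,y)"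
        and Hxy="\<lambda>t y. pd 2 (pd 0 u) t (c,y)" and Hyx="\<lambda>t y. pd 0 (pd 2 u) t (c,y)"])
    show "((\<lambda>x. u x (c, y')) has_real_derivative pd 0 u x' (c, y')) (at x')" for x' y' by (rule pd0_D[OF u])
    show "((\<lambda>y. u x' (c, y)) has_real_derivative pd 2 u x' (c, y')) (at y')" for x' y' by (rule pd2_D[OF u])
    show "((\<lambda>y. pd 0 u x' (c, y)) has_real_derivative pd 2 (pd 0 u) x' (c, y')) (at y')" for x' y' by (rule pd2_D[OF u0])
    show "((\<lambda>x. pd 2 u x (c, y')) has_real_derivative pd 0 (pd 2 u) x' (c, y')) (at x')" for x' y' by (rule pd0_D[OF u1])
    show "continuous_on UNIV (\<lambda>p. pd 2 (pd 0 u) (fst p) (c, snd p))"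
      by (rule cont_comp2[OF pd_cont[OF u0]]) (auto intro!: continuous_intros)
    show "continuous_on UNIV (\<lambda>p. pd 0 (pd 2 u) (fst p) (c, snd p))"
      by (rule cont_comp2[OF pd_cont[OF u1]]) (auto intro!: continuous_intros)
  qed
  then show ?thesis using x by simp
qed

lemma hyp_sq: "(hyp_t s x)\<^sup>2 = s\<^sup>2 + (norm x)\<^sup>2"
  unfolding hyp_t_def by simp

lemma hyp_gt: "s \<noteq> 0 \<Longrightarrow> hyp_t s x > norm x"
proof -
  assume "s \<noteq> 0"
  then have "sqrt ((norm x)\<^sup>2) < sqrt (s\<^sup>2 + (norm x)\<^sup>2)" by (intro real_sqrt_less_mono) simp
  then show ?thesis unfolding hyp_t_def by simp
qed

lemma hyp_pos: "s \<noteq> 0 \<Longrightarrow> hyp_t s x > 0"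
  using hyp_gt[of s x] norm_ge_zero[of x] by linarith

lemma hyp_Pair: "hyp_t s (y,c) = sqrt (s\<^sup>2 + y\<^sup>2 + c\<^sup>2)" for y c :: real
  unfolding hyp_t_def by (simp add: norm_Pair add.assoc)

lemma dT_s:
  assumes "s \<noteq> 0"
  shows "((\<lambda>s. hyp_t s x) has_real_derivative s / hyp_t s x) (at s)"
proof -
  have p: "s\<^sup>2 + (norm x)\<^sup>2 > 0" using assms by (simp add: add_pos_nonneg)
  show ?thesis unfolding hyp_t_def
    using p by (auto intro!: derivative_eq_intros simp: field_simps)
qed

lemma dT_1:
  assumes "s \<noteq> 0"
  shows "((\<lambda>y. hyp_t s (y,c)) has_real_derivative y / hyp_t s (y,c)) (at y)"
proof -
  have p: "s\<^sup>2 + y\<^sup>2 + c\<^sup>2 > 0" using assms by (simp add: add_pos_nonneg)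
  show ?thesis unfolding hyp_Pair
    using p by (auto intro!: derivative_eq_intros simp: field_simps)
qed

lemma dT_2:
  assumes "s \<noteq> 0"
  shows "((\<lambda>y. hyp_t s (c,y)) has_real_derivative y / hyp_t s (c,y)) (at y)"
proof -
  have p: "s\<^sup>2 + c\<^sup>2 + y\<^sup>2 > 0" using assms by (simp add: add_pos_nonneg)
  show ?thesis unfolding hyp_Pair
    using p by (auto intro!: derivative_eq_intros simp: field_simps)
qed

lemma dr_1:
  fixes y c :: real
  assumes "c \<noteq> 0"
  shows "((\<lambda>y. norm (y,c)) has_real_derivative y / norm (y,c)) (at y)"
proof -
  have p: "y\<^sup>2 + c\<^sup>2 > 0" using assms by (simp add: add_nonneg_pos)
  show ?thesis unfolding norm_Pair
    using p by (auto intro!: derivative_eq_intros simp: field_simps)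
qed

lemma dr_2:
  fixes y c :: real
  assumes "c \<noteq> 0"
  shows "((\<lambda>y. norm (c,y)) has_real_derivative y / norm (c,y)) (at y)"
proof -
  have p: "c\<^sup>2 + y\<^sup>2 > 0" using assms by (simp add: add_pos_nonneg)
  show ?thesis unfolding norm_Pair
    using p by (auto intro!: derivative_eq_intros simp: field_simps)
qed

definition Af :: "(real \<Rightarrow> real \<times> real \<Rightarrow> real) \<Rightarrow> nat \<Rightarrow> real \<Rightarrow> real \<times> real \<Rightarrow> real" where
  "Af u i s x = pd i u (hyp_t s x) x"
definition Bf :: "(real \<Rightarrow> real \<times> real \<Rightarrow> real) \<Rightarrow> nat \<Rightarrow> nat \<Rightarrow> real \<Rightarrow> real \<times> real \<Rightarrow> real" where
  "Bf u i j s x = pd j (pd i u) (hyp_t s x) x"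
definition Wf :: "real \<Rightarrow> real \<Rightarrow> real \<times> real \<Rightarrow> real" where
  "Wf g s x = (hyp_t s x - norm x) powr (-g)"
definition Pf :: "real \<Rightarrow> real \<Rightarrow> real \<times> real \<Rightarrow> real" where
  "Pf g s x = (hyp_t s x - norm x) powr (-g - 1)"

lemma dA_s:
  assumes "C2_reg u" "s \<noteq> 0" "i < 3"
  shows "((\<lambda>s. Af u i s x) has_real_derivative Bf u i 0 s x * (s / hyp_t s x)) (at s)"
  unfolding Af_def Bf_def by (rule chain0[OF C2_C1d[OF assms(1,3)] dT_s[OF assms(2)]])

lemma dA_1:
  assumes "C2_reg u" "s \<noteq> 0" "i < 3"
  shows "((\<lambda>y. Af u i s (y,c)) has_real_derivative Bf u i 0 s (y,c) * (y / hyp_t s (y,c)) + Bf u i 1 s (y,c)) (at y)"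
  unfolding Af_def Bf_def by (rule chain1[OF C2_C1d[OF assms(1,3)] dT_1[OF assms(2)]])

lemma dA_2:
  assumes "C2_reg u" "s \<noteq> 0" "i < 3"
  shows "((\<lambda>y. Af u i s (c,y)) has_real_derivative Bf u i 0 s (c,y) * (y / hyp_t s (c,y)) + Bf u i 2 s (c,y)) (at y)"
  unfolding Af_def Bf_def by (rule chain2[OF C2_C1d[OF assms(1,3)] dT_2[OF assms(2)]])

lemma dW_s:
  assumes "s \<noteq> 0"
  shows "((\<lambda>s. Wf g s x) has_real_derivative - g * Pf g s x * (s / hyp_t s x)) (at s)"
proof -
  have "((\<lambda>s. (hyp_t s x - norm x) powr (-g)) has_real_derivative (-g) * (hyp_t s x - norm x) powr (-g - of_nat 1) * (s / hyp_t s x - 0)) (at s)"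
    by (rule DERIV_fun_powr[OF DERIV_diff[OF dT_s[OF assms] DERIV_const]]) (use hyp_gt[OF assms, of x] in simp)
  then show ?thesis unfolding Wf_def Pf_def by simp
qed

lemma dW_1:
  assumes "s \<noteq> 0" "c \<noteq> 0"
  shows "((\<lambda>y. Wf g s (y,c)) has_real_derivative - g * Pf g s (y,c) * (y / hyp_t s (y,c) - y / norm (y,c))) (at y)"
proof -
  have "((\<lambda>y. (hyp_t s (y,c) - norm (y,c)) powr (-g)) has_real_derivative (-g) * (hyp_t s (y,c) - norm (y,c)) powr (-g - of_nat 1) * (y / hyp_t s (y,c) - y / norm (y,c))) (at y)"
    by (rule DERIV_fun_powr[OF DERIV_diff[OF dT_1[OF assms(1)] dr_1[OF assms(2)]]]) (use hyp_gt[OF assms(1), of "(y,c)"] in simp)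
  then show ?thesis unfolding Wf_def Pf_def by simp
qed

lemma dW_2:
  assumes "s \<noteq> 0" "c \<noteq> 0"
  shows "((\<lambda>y. Wf g s (c,y)) has_real_derivative - g * Pf g s (c,y) * (y / hyp_t s (c,y) - y / norm (c,y))) (at y)"
proof -
  have "((\<lambda>y. (hyp_t s (c,y) - norm (c,y)) powr (-g)) has_real_derivative (-g) * (hyp_t s (c,y) - norm (c,y)) powr (-g - of_nat 1) * (y / hyp_t s (c,y) - y / norm (c,y))) (at y)"
    by (rule DERIV_fun_powr[OF DERIV_diff[OF dT_2[OF assms(1)] dr_2[OF assms(2)]]]) (use hyp_gt[OF assms(1), of "(c,y)"] in simp)
  then show ?thesis unfolding Wf_def Pf_def by simp
qed

lemma alg_sq:
  fixes y1 y2 r a b1 b2 :: real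
  assumes "r \<noteq> 0" "r\<^sup>2 = y1\<^sup>2 + y2\<^sup>2"
  shows "(b1 + y1/r*a)\<^sup>2 + (b2 + y2/r*a)\<^sup>2 = b1\<^sup>2 + b2\<^sup>2 + 2*(y1*b1+y2*b2)*a/r + a\<^sup>2"
proof -
  have "(b1 + y1/r*a)\<^sup>2 + (b2 + y2/r*a)\<^sup>2 = b1\<^sup>2 + b2\<^sup>2 + 2*(y1*b1+y2*b2)*a/r + (y1\<^sup>2 + y2\<^sup>2)/r\<^sup>2 * a\<^sup>2"
    using assms(1) by (simp add: field_simps power2_eq_square)
  also have "(y1\<^sup>2 + y2\<^sup>2)/r\<^sup>2 = 1" using assms by (metis divide_self power_not_zero)
  finally show ?thesis by simp
qed

lemma alg_main:
  fixes s y1 y2 T r W P g a b1 b2 B00 B01 B02 B11 B22 :: real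
  assumes "T \<noteq> 0" "r \<noteq> 0"
  shows "(- g * P * (s/T) * (a\<^sup>2 + b1\<^sup>2 + b2\<^sup>2 + 2 * ((y1/T) * b1 * a + (y2/T) * b2 * a)) + W * (2*a*(B00*(s/T)) + 2*b1*(B01*(s/T)) + 2*b2*(B02*(s/T)) + 2*((- y1*(s/T)/T\<^sup>2)*b1*a + (y1/T)*(B01*(s/T))*a + (y1/T)*b1*(B00*(s/T)) + (- y2*(s/T)/T\<^sup>2)*b2*a + (y2/T)*(B02*(s/T))*a + (y2/T)*b2*(B00*(s/T))))) / 2
 + (- ((- (s*(y1/T)/T\<^sup>2)) * W * b1 * a + (s/T) * (- g * P * (y1/T - y1/r)) * b1 * a + (s/T) * W * (B01*(y1/T) + B11) * a + (s/T) * W * b1 * (B00*(y1/T) + B01)))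
 + (- ((- (s*(y2/T)/T\<^sup>2)) * W * b2 * a + (s/T) * (- g * P * (y2/T - y2/r)) * b2 * a + (s/T) * W * (B02*(y2/T) + B22) * a + (s/T) * W * b2 * (B00*(y2/T) + B02)))
 = (s/T) * W * a * (B00 - B11 - B22) - (s/T) * (g/2) * P * (b1\<^sup>2 + b2\<^sup>2 + 2*(y1*b1+y2*b2)*a/r + a\<^sup>2)"
  using assms by (simp add: field_simps power2_eq_square)

definition densf :: "(real \<Rightarrow> real \<times> real \<Rightarrow> real) \<Rightarrow> real \<Rightarrow> real \<times> real \<Rightarrow> real" where
  "densf u s x = (Af u 0 s x)\<^sup>2 + (Af u 1 s x)\<^sup>2 + (Af u 2 s x)\<^sup>2
     + 2 * ((fst x / hyp_t s x) * Af u 1 s x * Af u 0 s x + (snd x / hyp_t s x) * Af u 2 s x * Af u 0 s x)"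

definition Ef :: "(real \<Rightarrow> real \<times> real \<Rightarrow> real) \<Rightarrow> real \<Rightarrow> real \<Rightarrow> real \<times> real \<Rightarrow> real" where
  "Ef u g s x = Wf g s x * densf u s x / 2"

definition dEf :: "(real \<Rightarrow> real \<times> real \<Rightarrow> real) \<Rightarrow> real \<Rightarrow> real \<Rightarrow> real \<times> real \<Rightarrow> real" where
  "dEf u g s x = (let T = hyp_t s x; a = Af u 0 s x; b1 = Af u 1 s x; b2 = Af u 2 s x;
     B00 = Bf u 0 0 s x; B01 = Bf u 1 0 s x; B02 = Bf u 2 0 s x; y1 = fst x; y2 = snd x; W = Wf g s x; P = Pf g s x in
     (- g * P * (s/T) * (a\<^sup>2 + b1\<^sup>2 + b2\<^sup>2 + 2 * ((y1/T) * b1 * a + (y2/T) * b2 * a)) + W * (2*a*(B00*(s/T)) + 2*b1*(B01*(s/T)) + 2*b2*(B02*(s/T)) + 2*((- y1*(s/T)/T\<^sup>2)*b1*a + (y1/T)*(B01*(s/T))*a + (y1/T)*b1*(B00*(s/T)) + (- y2*(s/T)/T\<^sup>2)*b2*a + (y2/T)*(B02*(s/T))*a + (y2/T)*b2*(B00*(s/T))))) / 2)"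

definition K1f :: "(real \<Rightarrow> real \<times> real \<Rightarrow> real) \<Rightarrow> real \<Rightarrow> real \<Rightarrow> real \<times> real \<Rightarrow> real" where
  "K1f u g s x = - ((s / hyp_t s x) * Wf g s x * Af u 1 s x * Af u 0 s x)"
definition K2f :: "(real \<Rightarrow> real \<times> real \<Rightarrow> real) \<Rightarrow> real \<Rightarrow> real \<Rightarrow> real \<times> real \<Rightarrow> real" where
  "K2f u g s x = - ((s / hyp_t s x) * Wf g s x * Af u 2 s x * Af u 0 s x)"

definition D1f :: "(real \<Rightarrow> real \<times> real \<Rightarrow> real) \<Rightarrow> real \<Rightarrow> real \<Rightarrow> real \<times> real \<Rightarrow> real" where
  "D1f u g s x = (let T = hyp_t s x; r = norm x; y = fst x; a = Af u 0 s x; b = Af u 1 s x;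
     B00 = Bf u 0 0 s x; B01 = Bf u 0 1 s x; B10 = Bf u 1 0 s x; B11 = Bf u 1 1 s x; W = Wf g s x; P = Pf g s x in
     - ((- (s*(y/T)/T\<^sup>2)) * W * b * a + (s/T) * (- g * P * (y/T - y/r)) * b * a + (s/T) * W * (B10*(y/T) + B11) * a + (s/T) * W * b * (B00*(y/T) + B01)))"
definition D2f :: "(real \<Rightarrow> real \<times> real \<Rightarrow> real) \<Rightarrow> real \<Rightarrow> real \<Rightarrow> real \<times> real \<Rightarrow> real" where
  "D2f u g s x = (let T = hyp_t s x; r = norm x; y = snd x; a = Af u 0 s x; b = Af u 2 s x;
     B00 = Bf u 0 0 s x; B02 = Bf u 0 2 s x; B20 = Bf u 2 0 s x; B22 = Bf u 2 2 s x; W = Wf g s x; P = Pf g s x in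
     - ((- (s*(y/T)/T\<^sup>2)) * W * b * a + (s/T) * (- g * P * (y/T - y/r)) * b * a + (s/T) * W * (B20*(y/T) + B22) * a + (s/T) * W * b * (B00*(y/T) + B02)))"

definition hf :: "(real \<Rightarrow> real \<times> real \<Rightarrow> real) \<Rightarrow> real \<Rightarrow> real \<Rightarrow> real \<times> real \<Rightarrow> real" where
  "hf u g s x = (s / hyp_t s x) * Wf g s x * Af u 0 s x * (Bf u 0 0 s x - Bf u 1 1 s x - Bf u 2 2 s x)"

definition goodf :: "(real \<Rightarrow> real \<times> real \<Rightarrow> real) \<Rightarrow> real \<Rightarrow> real \<Rightarrow> real \<times> real \<Rightarrow> real" where
  "goodf u g s x = (s / hyp_t s x) * (g/2) * Pf g s x * ((Af u 1 s x)\<^sup>2 + (Af u 2 s x)\<^sup>2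
      + 2*(fst x * Af u 1 s x + snd x * Af u 2 s x) * Af u 0 s x / norm x + (Af u 0 s x)\<^sup>2)"

lemma identity:
  assumes "C2_reg u" "s \<noteq> 0" "x \<noteq> 0"
  shows "dEf u g s x + D1f u g s x + D2f u g s x = hf u g s x - goodf u g s x"
proof -
  have T: "hyp_t s x \<noteq> 0" using hyp_pos[OF assms(2), of x] by simp
  have r: "norm x \<noteq> 0" using assms(3) by simp
  have s1: "Bf u 1 0 s x = Bf u 0 1 s x" unfolding Bf_def using sym01[OF assms(1)] by simp
  have s2: "Bf u 2 0 s x = Bf u 0 2 s x" unfolding Bf_def using sym02[OF assms(1)] by simp
  show ?thesis
    unfolding dEf_def D1f_def D2f_def hf_def goodf_def Let_def s1 s2
    by (rule alg_main[OF T r])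
qed

lemma dE:
  assumes "C2_reg u" "s \<noteq> 0"
  shows "((\<lambda>s. Ef u g s x) has_real_derivative dEf u g s x) (at s)"
proof -
  have a: "((\<lambda>s. Af u 0 s x) has_real_derivative Bf u 0 0 s x * (s / hyp_t s x)) (at s)" by (rule dA_s[OF assms(1,2)]) simp
  have b1: "((\<lambda>s. Af u 1 s x) has_real_derivative Bf u 1 0 s x * (s / hyp_t s x)) (at s)" by (rule dA_s[OF assms(1,2)]) simp
  have b2: "((\<lambda>s. Af u 2 s x) has_real_derivative Bf u 2 0 s x * (s / hyp_t s x)) (at s)" by (rule dA_s[OF assms(1,2)]) simp
  note W = dW_s[OF assms(2), of g x] and T = dT_s[OF assms(2), of x]
  have Tn: "hyp_t s x \<noteq> 0" using hyp_pos[OF assms(2), of x] by simp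
  show ?thesis unfolding Ef_def densf_def
    apply (intro derivative_eq_intros)
    apply (rule W a b1 b2 T refl Tn)+
    using Tn apply (simp_all add: dEf_def Let_def field_simps power2_eq_square)
    done
qed

lemma dK1:
  assumes "C2_reg u" "s \<noteq> 0" "c \<noteq> 0"
  shows "((\<lambda>y. K1f u g s (y,c)) has_real_derivative D1f u g s (y,c)) (at y)"
proof -
  have a: "((\<lambda>y. Af u 0 s (y,c)) has_real_derivative Bf u 0 0 s (y,c) * (y / hyp_t s (y,c)) + Bf u 0 1 s (y,c)) (at y)" by (rule dA_1[OF assms(1,2)]) simp
  have b: "((\<lambda>y. Af u 1 s (y,c)) has_real_derivative Bf u 1 0 s (y,c) * (y / hyp_t s (y,c)) + Bf u 1 1 s (y,c)) (at y)" by (rule dA_1[OF assms(1,2)]) simp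
  note W = dW_1[OF assms(2,3), of g y] and T = dT_1[OF assms(2), of c y]
  have Tn: "hyp_t s (y,c) \<noteq> 0" using hyp_pos[OF assms(2), of "(y,c)"] by simp
  show ?thesis unfolding K1f_def
    apply (intro derivative_eq_intros)
    apply (rule W a b T refl Tn)+
    using Tn apply (simp_all add: D1f_def Let_def field_simps power2_eq_square)
    done
qed

lemma dK2:
  assumes "C2_reg u" "s \<noteq> 0" "c \<noteq> 0"
  shows "((\<lambda>y. K2f u g s (c,y)) has_real_derivative D2f u g s (c,y)) (at y)"
proof -
  have a: "((\<lambda>y. Af u 0 s (c,y)) has_real_derivative Bf u 0 0 s (c,y) * (y / hyp_t s (c,y)) + Bf u 0 2 s (c,y)) (at y)" by (rule dA_2[OF assms(1,2)]) simp
  have b: "((\<lambda>y. Af u 2 s (c,y)) has_real_derivative Bf u 2 0 s (c,y) * (y / hyp_t s (c,y)) + Bf u 2 2 s (c,y)) (at y)" by (rule dA_2[OF assms(1,2)]) simp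
  note W = dW_2[OF assms(2,3), of g y] and T = dT_2[OF assms(2), of c y]
  have Tn: "hyp_t s (c,y) \<noteq> 0" using hyp_pos[OF assms(2), of "(c,y)"] by simp
  show ?thesis unfolding K2f_def
    apply (intro derivative_eq_intros)
    apply (rule W a b T refl Tn)+
    using Tn apply (simp_all add: D2f_def Let_def field_simps power2_eq_square)
    done
qed

lemma deriv_zero_open:
  assumes "(f has_real_derivative f') (at a)" "open S" "a \<in> S" "\<And>x. x \<in> S \<Longrightarrow> f x = 0"
  shows "f' = 0"
proof -
  have "((\<lambda>_. 0::real) has_real_derivative f') (at a)"
    by (rule has_field_derivative_transform_within_open[OF assms(1-3)]) (use assms(4) in simp)
  moreover have "((\<lambda>_. 0::real) has_real_derivative 0) (at a)" by simp
  ultimately show ?thesis using DERIV_unique by blast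
qed

lemma pd_vanish:
  assumes "C1_reg u" "\<forall>t x. norm x > t - 1 \<longrightarrow> u t x = 0" "norm x > t - 1" "i < 3"
  shows "pd i u t x = 0"
proof -
  obtain y c where x: "x = (y,c)" by (cases x)
  have i: "i = 0 \<or> i = 1 \<or> i = 2" using assms(4) by auto
  moreover have "pd 0 u t (y,c) = 0"
  proof (rule deriv_zero_open[OF pd0_D[OF assms(1)]])
    show "open {\<tau>. norm (y,c) > \<tau> - 1}" by (rule open_Collect_less) (auto intro!: continuous_intros)
    show "t \<in> {\<tau>. norm (y,c) > \<tau> - 1}" using assms(3) x by simp
    show "\<And>\<tau>. \<tau> \<in> {\<tau>. norm (y,c) > \<tau> - 1} \<Longrightarrow> u \<tau> (y,c) = 0" using assms(2) by auto
  qed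
  moreover have "pd 1 u t (y,c) = 0"
  proof (rule deriv_zero_open[OF pd1_D[OF assms(1)]])
    show "open {z. norm (z,c) > t - 1}" by (rule open_Collect_less) (auto intro!: continuous_intros)
    show "y \<in> {z. norm (z,c) > t - 1}" using assms(3) x by simp
    show "\<And>z. z \<in> {z. norm (z,c) > t - 1} \<Longrightarrow> u t (z,c) = 0" using assms(2) by auto
  qed
  moreover have "pd 2 u t (y,c) = 0"
  proof (rule deriv_zero_open[OF pd2_D[OF assms(1)]])
    show "open {z. norm (y,z) > t - 1}" by (rule open_Collect_less) (auto intro!: continuous_intros)
    show "c \<in> {z. norm (y,z) > t - 1}" using assms(3) x by simp
    show "\<And>z. z \<in> {z. norm (y,z) > t - 1} \<Longrightarrow> u t (y,z) = 0" using assms(2) by auto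
  qed
  ultimately show ?thesis using x by auto
qed

lemma supp_bound:
  assumes "0 < s" "s \<le> S" "norm x > S\<^sup>2"
  shows "norm x > hyp_t s x - 1"
proof -
  let ?T = "hyp_t s x" and ?r = "norm x"
  have T: "?T > ?r" using hyp_gt[of s x] assms(1) by simp
  have r0: "?r \<ge> 0" by simp
  have "(?T - ?r) * (?T + ?r) = s\<^sup>2" using hyp_sq[of s x] by (simp add: algebra_simps power2_eq_square)
  moreover have "s\<^sup>2 \<le> S\<^sup>2" using assms(1,2) by (simp add: power_mono)
  moreover have "?T + ?r > S\<^sup>2" using assms(3) T r0 by linarith
  ultimately have "(?T - ?r) * (?T + ?r) < 1 * (?T + ?r)" by simp
  moreover have pos: "?T + ?r > 0" using T r0 by linarith
  ultimately have "?T - ?r < 1" using mult_less_cancel_right_pos[OF pos] by blast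
  then show ?thesis by simp
qed

lemma Af_vanish:
  assumes "C1_reg u" "\<forall>t x. norm x > t - 1 \<longrightarrow> u t x = 0" "0 < s" "s \<le> S" "norm x > S\<^sup>2" "i < 3"
  shows "Af u i s x = 0"
  unfolding Af_def by (rule pd_vanish[OF assms(1,2) supp_bound[OF assms(3-5)] assms(6)])

lemma cAf:
  assumes "C1_reg u" "i < 3" "continuous_on S f" "continuous_on S g"
  shows "continuous_on S (\<lambda>z. Af u i (f z) (g z))"
  unfolding Af_def hyp_t_def
  by (rule cont_comp2[OF pd_cont[OF assms(1,2)]]) (auto intro!: continuous_intros assms(3,4))

lemma cBf:
  assumes "C2_reg u" "i < 3" "j < 3" "continuous_on S f" "continuous_on S g"
  shows "continuous_on S (\<lambda>z. Bf u i j (f z) (g z))"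
  unfolding Bf_def hyp_t_def
  by (rule cont_comp2[OF pd_cont[OF C2_C1d[OF assms(1,2)] assms(3)]]) (auto intro!: continuous_intros assms(4,5))

lemma cT:
  assumes "continuous_on S f" "continuous_on S g"
  shows "continuous_on S (\<lambda>z. hyp_t (f z) (g z))"
  unfolding hyp_t_def by (auto intro!: continuous_intros assms)

lemma cWf:
  assumes "continuous_on S f" "continuous_on S g" "\<And>z. z \<in> S \<Longrightarrow> f z \<noteq> 0"
  shows "continuous_on S (\<lambda>z. Wf c (f z) (g z))"
  unfolding Wf_def
proof (rule continuous_on_powr)
  show "continuous_on S (\<lambda>z. hyp_t (f z) (g z) - norm (g z))" by (intro continuous_intros cT assms)
  show "\<forall>z\<in>S. hyp_t (f z) (g z) - norm (g z) \<noteq> 0"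
  proof
    fix z assume "z \<in> S"
    then have "f z \<noteq> 0" by (rule assms(3))
    then have "hyp_t (f z) (g z) > norm (g z)" by (rule hyp_gt)
    then show "hyp_t (f z) (g z) - norm (g z) \<noteq> 0" by simp
  qed
qed (rule continuous_on_const)

lemma cPf:
  assumes "continuous_on S f" "continuous_on S g" "\<And>z. z \<in> S \<Longrightarrow> f z \<noteq> 0"
  shows "continuous_on S (\<lambda>z. Pf c (f z) (g z))"
  unfolding Pf_def
proof (rule continuous_on_powr)
  show "continuous_on S (\<lambda>z. hyp_t (f z) (g z) - norm (g z))" by (intro continuous_intros cT assms)
  show "\<forall>z\<in>S. hyp_t (f z) (g z) - norm (g z) \<noteq> 0"
  proof
    fix z assume "z \<in> S"
    then have "f z \<noteq> 0" by (rule assms(3))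
    then have "hyp_t (f z) (g z) > norm (g z)" by (rule hyp_gt)
    then show "hyp_t (f z) (g z) - norm (g z) \<noteq> 0" by simp
  qed
qed (rule continuous_on_const)

definition Q1f :: "(real \<Rightarrow> real \<times> real \<Rightarrow> real) \<Rightarrow> real \<Rightarrow> real \<Rightarrow> real \<times> real \<Rightarrow> real" where
  "Q1f u g s x = (s / hyp_t s x) * g * Pf g s x * Af u 1 s x * Af u 0 s x"
definition Q2f :: "(real \<Rightarrow> real \<times> real \<Rightarrow> real) \<Rightarrow> real \<Rightarrow> real \<Rightarrow> real \<times> real \<Rightarrow> real" where
  "Q2f u g s x = (s / hyp_t s x) * g * Pf g s x * Af u 2 s x * Af u 0 s x"

definition D1c :: "(real \<Rightarrow> real \<times> real \<Rightarrow> real) \<Rightarrow> real \<Rightarrow> real \<Rightarrow> real \<times> real \<Rightarrow> real" where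
  "D1c u g s x = (let T = hyp_t s x; y = fst x; a = Af u 0 s x; b = Af u 1 s x;
     B00 = Bf u 0 0 s x; B01 = Bf u 0 1 s x; B10 = Bf u 1 0 s x; B11 = Bf u 1 1 s x; W = Wf g s x; P = Pf g s x in
     - ((- (s*(y/T)/T\<^sup>2)) * W * b * a + (s/T) * (- g * P * (y/T)) * b * a + (s/T) * W * (B10*(y/T) + B11) * a + (s/T) * W * b * (B00*(y/T) + B01)))"
definition D2c :: "(real \<Rightarrow> real \<times> real \<Rightarrow> real) \<Rightarrow> real \<Rightarrow> real \<Rightarrow> real \<times> real \<Rightarrow> real" where
  "D2c u g s x = (let T = hyp_t s x; y = snd x; a = Af u 0 s x; b = Af u 2 s x;
     B00 = Bf u 0 0 s x; B02 = Bf u 0 2 s x; B20 = Bf u 2 0 s x; B22 = Bf u 2 2 s x; W = Wf g s x; P = Pf g s x in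
     - ((- (s*(y/T)/T\<^sup>2)) * W * b * a + (s/T) * (- g * P * (y/T)) * b * a + (s/T) * W * (B20*(y/T) + B22) * a + (s/T) * W * b * (B00*(y/T) + B02)))"

lemma D1_split: "D1f u g s x = D1c u g s x - Q1f u g s x * (fst x / norm x)"
  unfolding D1f_def D1c_def Q1f_def Let_def by (simp add: algebra_simps)
lemma D2_split: "D2f u g s x = D2c u g s x - Q2f u g s x * (snd x / norm x)"
  unfolding D2f_def D2c_def Q2f_def Let_def by (simp add: algebra_simps)

lemma vanish_all:
  assumes "C2_reg u" "\<forall>t x. norm x > t - 1 \<longrightarrow> u t x = 0" "0 < s" "s \<le> S" "norm x > S\<^sup>2"
  shows "Ef u g s x = 0" "dEf u g s x = 0" "D1f u g s x = 0" "D2f u g s x = 0" "hf u g s x = 0"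
    "K1f u g s x = 0" "K2f u g s x = 0" "densf u s x = 0" "D1c u g s x = 0" "D2c u g s x = 0"
    "Q1f u g s x = 0" "Q2f u g s x = 0"
proof -
  have "Af u 0 s x = 0" "Af u 1 s x = 0" "Af u 2 s x = 0"
    by (rule Af_vanish[OF C2_C1[OF assms(1)] assms(2-5)]; simp)+
  then show "Ef u g s x = 0" "dEf u g s x = 0" "D1f u g s x = 0" "D2f u g s x = 0" "hf u g s x = 0"
    "K1f u g s x = 0" "K2f u g s x = 0" "densf u s x = 0" "D1c u g s x = 0" "D2c u g s x = 0"
    "Q1f u g s x = 0" "Q2f u g s x = 0"
    by (simp_all add: Ef_def dEf_def D1f_def D2f_def hf_def K1f_def K2f_def densf_def D1c_def D2c_def Q1f_def Q2f_def Let_def power2_eq_square)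
qed

lemma hypT_ne: "(\<And>z. z \<in> S \<Longrightarrow> f z \<noteq> 0) \<Longrightarrow> \<forall>z\<in>S. hyp_t (f z) (h z) \<noteq> 0"
  using hyp_pos by (metis less_irrefl)

lemma hypT_ne': "(\<And>z. z \<in> S \<Longrightarrow> f z \<noteq> 0) \<Longrightarrow> \<forall>z\<in>S. (hyp_t (f z) (h z))\<^sup>2 \<noteq> 0"
  using hyp_pos by (metis less_irrefl power_not_zero)

context
  fixes u :: "real \<Rightarrow> real \<times> real \<Rightarrow> real" and g :: real and S :: "'z::topological_space set"
    and f :: "'z \<Rightarrow> real" and h :: "'z \<Rightarrow> real \<times> real"
  assumes u: "C2_reg u" and cf: "continuous_on S f" and ch: "continuous_on S h" and nz: "\<And>z. z \<in> S \<Longrightarrow> f z \<noteq> 0"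
begin

lemmas cc = continuous_intros cAf[OF C2_C1[OF u]] cBf[OF u] cWf cPf cT cf ch nz hypT_ne[OF nz] hypT_ne'[OF nz]

lemma cE: "continuous_on S (\<lambda>z. Ef u g (f z) (h z))"
  unfolding Ef_def densf_def by (intro cc; simp)
lemma cdens: "continuous_on S (\<lambda>z. densf u (f z) (h z))"
  unfolding densf_def by (intro cc; simp)
lemma cdE: "continuous_on S (\<lambda>z. dEf u g (f z) (h z))"
  unfolding dEf_def densf_def Let_def by (intro cc; simp)
lemma chf: "continuous_on S (\<lambda>z. hf u g (f z) (h z))"
  unfolding hf_def by (intro cc; simp)
lemma cD1c: "continuous_on S (\<lambda>z. D1c u g (f z) (h z))"
  unfolding D1c_def Let_def by (intro cc; simp)
lemma cD2c: "continuous_on S (\<lambda>z. D2c u g (f z) (h z))"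
  unfolding D2c_def Let_def by (intro cc; simp)
lemma cQ1: "continuous_on S (\<lambda>z. Q1f u g (f z) (h z))"
  unfolding Q1f_def by (intro cc; simp)
lemma cQ2: "continuous_on S (\<lambda>z. Q2f u g (f z) (h z))"
  unfolding Q2f_def by (intro cc; simp)

end

lemma integrable_cpt:
  fixes F :: "'a::euclidean_space \<Rightarrow> real"
  assumes "compact K" "continuous_on K F" "\<And>x. x \<notin> K \<Longrightarrow> F x = 0"
  shows "integrable lborel F"
proof -
  have "F = (\<lambda>x. indicator K x *\<^sub>R F x)" using assms(3) by (auto simp: indicator_def fun_eq_iff)
  then show ?thesis using borel_integrable_compact[OF assms(1,2)] by simp
qed

lemma cont_at_s: "continuous_on UNIV F \<Longrightarrow> continuous_on K F" by (rule continuous_on_subset) auto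

context
  fixes u :: "real \<Rightarrow> real \<times> real \<Rightarrow> real" and g :: real and s :: real
  assumes u: "C2_reg u" and supp: "\<forall>t x. norm x > t - 1 \<longrightarrow> u t x = 0" and s: "0 < s"
begin

lemma sne: "s \<noteq> 0" using s by simp

lemma out_ball: "x \<notin> cball 0 (s\<^sup>2) \<Longrightarrow> norm x > s\<^sup>2" by (simp add: dist_norm)

lemma int_gen:
  fixes F :: "real \<times> real \<Rightarrow> real"
  assumes "continuous_on UNIV F" "\<And>x. norm x > s\<^sup>2 \<Longrightarrow> F x = 0"
  shows "integrable lborel F"
  by (rule integrable_cpt[of "cball 0 (s\<^sup>2)"]) (auto intro: cont_at_s[OF assms(1)] assms(2) out_ball)

lemmas cU = continuous_on_const[of UNIV s] continuous_on_id[of UNIV]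

lemma intE: "integrable lborel (Ef u g s)"
  proof (rule int_gen)
    show "continuous_on UNIV (Ef u g s)" by (rule cE[OF u cU]) (rule sne)
  qed (rule vanish_all(1)[OF u supp s order_refl])

lemma intdens: "integrable lborel (densf u s)"
  proof (rule int_gen)
    show "continuous_on UNIV (densf u s)" by (rule cdens[OF u cU]) (rule sne)
  qed (rule vanish_all(8)[OF u supp s order_refl])

lemma intdE: "integrable lborel (dEf u g s)"
  proof (rule int_gen)
    show "continuous_on UNIV (dEf u g s)" by (rule cdE[OF u cU]) (rule sne)
  qed (rule vanish_all(2)[OF u supp s order_refl])

lemma inthf: "integrable lborel (hf u g s)"
  proof (rule int_gen)
    show "continuous_on UNIV (hf u g s)" by (rule chf[OF u cU]) (rule sne)
  qed (rule vanish_all(5)[OF u supp s order_refl])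

lemma intD1: "integrable lborel (D1f u g s)"
proof -
  have c: "integrable lborel (D1c u g s)"
    proof (rule int_gen)
    show "continuous_on UNIV (D1c u g s)" by (rule cD1c[OF u cU]) (rule sne)
  qed (rule vanish_all(9)[OF u supp s order_refl])
  have q: "integrable lborel (Q1f u g s)"
    proof (rule int_gen)
    show "continuous_on UNIV (Q1f u g s)" by (rule cQ1[OF u cU]) (rule sne)
  qed (rule vanish_all(11)[OF u supp s order_refl])
  have qm: "Q1f u g s \<in> borel_measurable borel"
    by (rule borel_measurable_continuous_onI, rule cQ1[OF u cU]) (rule sne)
  have m: "(\<lambda>x. Q1f u g s x * (fst x / norm x)) \<in> borel_measurable lborel"
  proof -
    have f: "(\<lambda>x::real\<times>real. fst x) \<in> borel_measurable borel" by (rule borel_measurable_continuous_onI) (intro continuous_intros)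
    have n: "(\<lambda>x::real\<times>real. norm x) \<in> borel_measurable borel" by (rule borel_measurable_continuous_onI) (intro continuous_intros)
    have "(\<lambda>x. Q1f u g s x * (fst x / norm x)) \<in> borel_measurable borel"
      by (intro borel_measurable_times borel_measurable_divide qm f n)
    then show ?thesis by (simp add: measurable_lborel1)
  qed
  have b: "norm (Q1f u g s x * (fst x / norm x)) \<le> norm (Q1f u g s x)" for x
  proof -
    have fx: "\<bar>fst x\<bar> \<le> norm x" using norm_fst_le[of "fst x" "snd x"] by simp
    have "\<bar>fst x / norm x\<bar> \<le> 1"
    proof (cases "norm x = 0")
      case False
      then have "norm x > 0" by simp
      then show ?thesis using fx by (simp add: abs_divide divide_le_eq_1)
    qed simp
    then have "\<bar>Q1f u g s x\<bar> * \<bar>fst x / norm x\<bar> \<le> \<bar>Q1f u g s x\<bar>" by (rule mult_left_le) simp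
    then show ?thesis by (simp only: real_norm_def abs_mult)
  qed
  have "integrable lborel (\<lambda>x. Q1f u g s x * (fst x / norm x))"
    by (rule Bochner_Integration.integrable_bound[OF q m]) (use b in auto)
  then show ?thesis using c unfolding D1_split[abs_def] by auto
qed


lemma intD2: "integrable lborel (D2f u g s)"
proof -
  have c: "integrable lborel (D2c u g s)"
    proof (rule int_gen)
    show "continuous_on UNIV (D2c u g s)" by (rule cD2c[OF u cU]) (rule sne)
  qed (rule vanish_all(10)[OF u supp s order_refl])
  have q: "integrable lborel (Q2f u g s)"
    proof (rule int_gen)
    show "continuous_on UNIV (Q2f u g s)" by (rule cQ2[OF u cU]) (rule sne)
  qed (rule vanish_all(12)[OF u supp s order_refl])
  have qm: "Q2f u g s \<in> borel_measurable borel"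
    by (rule borel_measurable_continuous_onI, rule cQ2[OF u cU]) (rule sne)
  have m: "(\<lambda>x. Q2f u g s x * (snd x / norm x)) \<in> borel_measurable lborel"
  proof -
    have f: "(\<lambda>x::real\<times>real. snd x) \<in> borel_measurable borel" by (rule borel_measurable_continuous_onI) (intro continuous_intros)
    have n: "(\<lambda>x::real\<times>real. norm x) \<in> borel_measurable borel" by (rule borel_measurable_continuous_onI) (intro continuous_intros)
    have "(\<lambda>x. Q2f u g s x * (snd x / norm x)) \<in> borel_measurable borel"
      by (intro borel_measurable_times borel_measurable_divide qm f n)
    then show ?thesis by (simp add: measurable_lborel1)
  qed
  have b: "norm (Q2f u g s x * (snd x / norm x)) \<le> norm (Q2f u g s x)" for x
  proof -
    have fx: "\<bar>snd x\<bar> \<le> norm x" by (metis norm_snd_le prod.collapse real_norm_def)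
    have "\<bar>snd x / norm x\<bar> \<le> 1"
    proof (cases "norm x = 0")
      case False
      then have "norm x > 0" by simp
      then show ?thesis using fx by (simp add: abs_divide divide_le_eq_1)
    qed simp
    then have "\<bar>Q2f u g s x\<bar> * \<bar>snd x / norm x\<bar> \<le> \<bar>Q2f u g s x\<bar>" by (rule mult_left_le) simp
    then show ?thesis by (simp only: real_norm_def abs_mult)
  qed
  have "integrable lborel (\<lambda>x. Q2f u g s x * (snd x / norm x))"
    by (rule Bochner_Integration.integrable_bound[OF q m]) (use b in auto)
  then show ?thesis using c unfolding D2_split[abs_def] by auto
qed


lemma normfst: "\<bar>y\<bar> \<le> norm (y,c::real)" using norm_fst_le[of y c] by simp
lemma normsnd: "\<bar>y\<bar> \<le> norm (c::real,y)" using norm_snd_le[of y c] by simp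

lemma line1_zero:
  assumes c: "c \<noteq> 0"
  shows "(\<integral>y. D1f u g s (y,c) \<partial>lborel) = 0"
proof -
  define R where "R = s\<^sup>2 + 1"
  have R: "R > s\<^sup>2" "-R \<le> R" unfolding R_def by (auto simp: add_nonneg_pos)
  have vz: "D1f u g s (y,c) = 0" "K1f u g s (y,c) = 0" if "\<bar>y\<bar> > s\<^sup>2" for y
    using vanish_all(3,6)[OF u supp s order_refl, of "(y,c)"] normfst[of y c] that by auto
  have deriv: "((\<lambda>y. K1f u g s (y,c)) has_vector_derivative D1f u g s (y,c)) (at y within {-R..R})" for y
    using dK1[OF u sne c, of g y] unfolding has_real_derivative_iff_has_vector_derivative
    by (rule has_vector_derivative_at_within)
  have cont: "continuous_on {-R..R} (\<lambda>y. D1f u g s (y,c))"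
  proof -
    have "continuous_on {-R..R} (\<lambda>y. D1c u g s (y,c) - Q1f u g s (y,c) * (fst (y,c) / norm (y,c)))"
      by (intro continuous_intros cD1c[OF u] cQ1[OF u]) (auto simp: sne c zero_prod_def)
    then show ?thesis unfolding D1_split .
  qed
  have "integral\<^sup>L lborel (\<lambda>y. indicator {-R..R} y *\<^sub>R D1f u g s (y,c)) = K1f u g s (R,c) - K1f u g s (-R,c)"
    by (rule integral_FTC_atLeastAtMost[OF R(2) deriv cont])
  also have "\<dots> = 0" using vz(2)[of R] vz(2)[of "-R"] R(1) by simp
  finally have *: "integral\<^sup>L lborel (\<lambda>y. indicator {-R..R} y *\<^sub>R D1f u g s (y,c)) = 0" .
  have "(\<lambda>y. indicator {-R..R} y *\<^sub>R D1f u g s (y,c)) = (\<lambda>y. D1f u g s (y,c))"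
    using vz(1) R(1) by (force simp: indicator_def fun_eq_iff abs_le_iff)
  then show ?thesis using * by simp
qed

lemma line2_zero:
  assumes c: "c \<noteq> 0"
  shows "(\<integral>y. D2f u g s (c,y) \<partial>lborel) = 0"
proof -
  define R where "R = s\<^sup>2 + 1"
  have R: "R > s\<^sup>2" "-R \<le> R" unfolding R_def by (auto simp: add_nonneg_pos)
  have vz: "D2f u g s (c,y) = 0" "K2f u g s (c,y) = 0" if "\<bar>y\<bar> > s\<^sup>2" for y
    using vanish_all(4,7)[OF u supp s order_refl, of "(c,y)"] normsnd[of y c] that by auto
  have deriv: "((\<lambda>y. K2f u g s (c,y)) has_vector_derivative D2f u g s (c,y)) (at y within {-R..R})" for y
    using dK2[OF u sne c, of g y] unfolding has_real_derivative_iff_has_vector_derivative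
    by (rule has_vector_derivative_at_within)
  have cont: "continuous_on {-R..R} (\<lambda>y. D2f u g s (c,y))"
  proof -
    have "continuous_on {-R..R} (\<lambda>y. D2c u g s (c,y) - Q2f u g s (c,y) * (snd (c,y) / norm (c,y)))"
      by (intro continuous_intros cD2c[OF u] cQ2[OF u]) (auto simp: sne c zero_prod_def)
    then show ?thesis unfolding D2_split .
  qed
  have "integral\<^sup>L lborel (\<lambda>y. indicator {-R..R} y *\<^sub>R D2f u g s (c,y)) = K2f u g s (c,R) - K2f u g s (c,-R)"
    by (rule integral_FTC_atLeastAtMost[OF R(2) deriv cont])
  also have "\<dots> = 0" using vz(2)[of R] vz(2)[of "-R"] R(1) by simp
  finally have *: "integral\<^sup>L lborel (\<lambda>y. indicator {-R..R} y *\<^sub>R D2f u g s (c,y)) = 0" .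
  have "(\<lambda>y. indicator {-R..R} y *\<^sub>R D2f u g s (c,y)) = (\<lambda>y. D2f u g s (c,y))"
    using vz(1) R(1) by (force simp: indicator_def fun_eq_iff abs_le_iff)
  then show ?thesis using * by simp
qed

lemma plane1_zero: "(\<integral>x. D1f u g s x \<partial>lborel) = 0"
proof -
  have e: "case_prod (\<lambda>y c. D1f u g s (y,c)) = D1f u g s" by auto
  have i: "integrable (lborel \<Otimes>\<^sub>M lborel) (case_prod (\<lambda>y c. D1f u g s (y,c)))"
    unfolding e lborel_prod by (rule intD1)
  have "(\<integral>c. (\<integral>y. D1f u g s (y,c) \<partial>lborel) \<partial>lborel) = integral\<^sup>L (lborel \<Otimes>\<^sub>M lborel) (case_prod (\<lambda>y c. D1f u g s (y,c)))"
    by (rule lborel_pair.integral_snd[OF i])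
  also have "\<dots> = (\<integral>x. D1f u g s x \<partial>lborel)" unfolding e lborel_prod ..
  finally have eq: "(\<integral>x. D1f u g s x \<partial>lborel) = (\<integral>c. (\<integral>y. D1f u g s (y,c) \<partial>lborel) \<partial>lborel)" by simp
  have "(\<integral>c. (\<integral>y. D1f u g s (y,c) \<partial>lborel) \<partial>lborel) = 0"
    by (rule integral_eq_zero_AE) (auto intro!: eventually_mono[OF AE_lborel_singleton[of 0]] line1_zero)
  then show ?thesis using eq by simp
qed

lemma plane2_zero: "(\<integral>x. D2f u g s x \<partial>lborel) = 0"
proof -
  have e: "case_prod (\<lambda>c y. D2f u g s (c,y)) = D2f u g s" by auto
  have i: "integrable (lborel \<Otimes>\<^sub>M lborel) (case_prod (\<lambda>c y. D2f u g s (c,y)))"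
    unfolding e lborel_prod by (rule intD2)
  have "(\<integral>c. (\<integral>y. D2f u g s (c,y) \<partial>lborel) \<partial>lborel) = integral\<^sup>L (lborel \<Otimes>\<^sub>M lborel) (\<lambda>(c,y). D2f u g s (c,y))"
    by (rule lborel_pair.integral_fst[OF i])
  also have "\<dots> = (\<integral>x. D2f u g s x \<partial>lborel)" using e unfolding lborel_prod by simp
  finally have eq: "(\<integral>x. D2f u g s x \<partial>lborel) = (\<integral>c. (\<integral>y. D2f u g s (c,y) \<partial>lborel) \<partial>lborel)" by simp
  have "(\<integral>c. (\<integral>y. D2f u g s (c,y) \<partial>lborel) \<partial>lborel) = 0"
    by (rule integral_eq_zero_AE) (auto intro!: eventually_mono[OF AE_lborel_singleton[of 0]] line2_zero)
  then show ?thesis using eq by simp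
qed

end

lemma normsq: "(norm x)\<^sup>2 = (fst x)\<^sup>2 + (snd x)\<^sup>2" for x :: "real \<times> real"
  by (cases x) (simp add: norm_Pair)

lemma goodf_nonneg:
  assumes "s > 0" "g \<ge> 0" "x \<noteq> 0"
  shows "goodf u g s x \<ge> 0"
proof -
  have r: "norm x \<noteq> 0" using assms(3) by simp
  have e: "(Af u 1 s x)\<^sup>2 + (Af u 2 s x)\<^sup>2 + 2*(fst x * Af u 1 s x + snd x * Af u 2 s x) * Af u 0 s x / norm x + (Af u 0 s x)\<^sup>2
      = (Af u 1 s x + fst x / norm x * Af u 0 s x)\<^sup>2 + (Af u 2 s x + snd x / norm x * Af u 0 s x)\<^sup>2"
    by (rule alg_sq[OF r normsq, symmetric])
  have T: "hyp_t s x > 0" using hyp_pos[of s x] assms(1) by simp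
  have P: "Pf g s x \<ge> 0" unfolding Pf_def by simp
  show ?thesis unfolding goodf_def e using T P assms(1,2) by (intro mult_nonneg_nonneg) auto
qed

context
  fixes u :: "real \<Rightarrow> real \<times> real \<Rightarrow> real" and g :: real and s :: real
  assumes u: "C2_reg u" and supp: "\<forall>t x. norm x > t - 1 \<longrightarrow> u t x = 0" and s: "0 < s" and g: "g \<ge> 0"
begin

lemma per_s: "(\<integral>x. dEf u g s x \<partial>lborel) \<le> (\<integral>x. hf u g s x \<partial>lborel)"
proof -
  note i1 = intdE[OF u supp s] and i2 = intD1[OF u supp s] and i3 = intD2[OF u supp s] and ih = inthf[OF u supp s]
  have "(\<integral>x. dEf u g s x \<partial>lborel) = (\<integral>x. dEf u g s x \<partial>lborel) + (\<integral>x. D1f u g s x \<partial>lborel) + (\<integral>x. D2f u g s x \<partial>lborel)"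
    using plane1_zero[OF u supp s] plane2_zero[OF u supp s] by simp
  also have "\<dots> = (\<integral>x. dEf u g s x + D1f u g s x + D2f u g s x \<partial>lborel)"
    using i1 i2 i3 by simp
  also have "\<dots> \<le> (\<integral>x. hf u g s x \<partial>lborel)"
  proof (rule integral_mono_AE)
    show "integrable lborel (\<lambda>x. dEf u g s x + D1f u g s x + D2f u g s x)" using i1 i2 i3 by simp
    show "integrable lborel (hf u g s)" by (rule ih)
    show "AE x in lborel. dEf u g s x + D1f u g s x + D2f u g s x \<le> hf u g s x"
    proof (rule eventually_mono[OF AE_lborel_singleton[of 0]])
      fix x :: "real \<times> real" assume x: "x \<noteq> 0"
      show "dEf u g s x + D1f u g s x + D2f u g s x \<le> hf u g s x"
        using identity[OF u _ x, of s g] goodf_nonneg[OF s g x, of u] s by simp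
    qed
  qed
  finally show ?thesis .
qed

end


lemma joint_int:
  fixes F :: "real \<Rightarrow> real \<times> real \<Rightarrow> real"
  assumes c: "continuous_on ({2..S} \<times> UNIV) (\<lambda>p. F (fst p) (snd p))"
    and v: "\<And>s x. 2 \<le> s \<Longrightarrow> s \<le> S \<Longrightarrow> norm x > S\<^sup>2 \<Longrightarrow> F s x = 0"
  shows "integrable (lborel \<Otimes>\<^sub>M lborel) (\<lambda>(s,x). indicator {2..S} s * F s x)"
  unfolding lborel_prod
proof (rule integrable_cpt[of "{2..S} \<times> cball 0 (S\<^sup>2)"])
  show "compact ({2..S} \<times> cball (0::real\<times>real) (S\<^sup>2))" by (intro compact_Times compact_Icc compact_cball)
  have "continuous_on ({2..S} \<times> cball 0 (S\<^sup>2)) (\<lambda>p. F (fst p) (snd p))"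
    by (rule continuous_on_subset[OF c]) auto
  then show "continuous_on ({2..S} \<times> cball 0 (S\<^sup>2)) (\<lambda>(s,x). indicator {2..S} s * F s x)"
    by (rule continuous_on_eq) (auto simp: indicator_def)
  show "(\<lambda>(s,x). indicator {2..S} s * F s x) p = 0" if "p \<notin> {2..S} \<times> cball 0 (S\<^sup>2)" for p
    using that v by (cases p) (auto simp: indicator_def mem_cball_0)
qed

context
  fixes u :: "real \<Rightarrow> real \<times> real \<Rightarrow> real" and g :: real and S :: real
  assumes u: "C2_reg u" and supp: "\<forall>t x. norm x > t - 1 \<longrightarrow> u t x = 0" and S: "2 \<le> S" and g: "g \<ge> 0"
begin

lemma nz2: "p \<in> {2..S} \<times> UNIV \<Longrightarrow> fst p \<noteq> 0" by auto

lemma jint_dE: "integrable (lborel \<Otimes>\<^sub>M lborel) (\<lambda>(s,x). indicator {2..S} s * dEf u g s x)"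
proof (rule joint_int)
  show "continuous_on ({2..S} \<times> UNIV) (\<lambda>p. dEf u g (fst p) (snd p))"
    by (rule cdE[OF u continuous_on_fst continuous_on_snd nz2]) (intro continuous_intros)+
  show "\<And>s x. 2 \<le> s \<Longrightarrow> s \<le> S \<Longrightarrow> norm x > S\<^sup>2 \<Longrightarrow> dEf u g s x = 0"
    using vanish_all(2)[OF u supp] by simp
qed

lemma jint_hf: "integrable (lborel \<Otimes>\<^sub>M lborel) (\<lambda>(s,x). indicator {2..S} s * hf u g s x)"
proof (rule joint_int)
  show "continuous_on ({2..S} \<times> UNIV) (\<lambda>p. hf u g (fst p) (snd p))"
    by (rule chf[OF u continuous_on_fst continuous_on_snd nz2]) (intro continuous_intros)+
  show "\<And>s x. 2 \<le> s \<Longrightarrow> s \<le> S \<Longrightarrow> norm x > S\<^sup>2 \<Longrightarrow> hf u g s x = 0"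
    using vanish_all(5)[OF u supp] by simp
qed

lemma ftc_s: "(\<integral>s. indicator {2..S} s * dEf u g s x \<partial>lborel) = Ef u g S x - Ef u g 2 x"
proof -
  have "integral\<^sup>L lborel (\<lambda>s. indicator {2..S} s *\<^sub>R dEf u g s x) = Ef u g S x - Ef u g 2 x"
  proof (rule integral_FTC_atLeastAtMost[OF S])
    show "((\<lambda>s. Ef u g s x) has_vector_derivative dEf u g s x) (at s within {2..S})" if "2 \<le> s" "s \<le> S" for s
    proof -
      have "s \<noteq> 0" using that by simp
      then have "((\<lambda>s. Ef u g s x) has_real_derivative dEf u g s x) (at s)" by (rule dE[OF u])
      then have "((\<lambda>s. Ef u g s x) has_vector_derivative dEf u g s x) (at s)"
        by (simp only: has_real_derivative_iff_has_vector_derivative)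
      then show ?thesis by (rule has_vector_derivative_at_within)
    qed
    show "continuous_on {2..S} (\<lambda>s. dEf u g s x)"
      by (rule cdE[OF u continuous_on_id continuous_on_const]) auto
  qed
  then show ?thesis by (simp only: scaleR_conv_of_real of_real_def[symmetric] of_real_eq_id id_def)
qed

lemma main_ineq:
  "(\<integral>x. Ef u g S x \<partial>lborel) - (\<integral>x. Ef u g 2 x \<partial>lborel) \<le> (\<integral>s. (\<integral>x. indicator {2..S} s * hf u g s x \<partial>lborel) \<partial>lborel)"
proof -
  have S0: "0 < S" using S by simp
  have "(\<integral>x. Ef u g S x \<partial>lborel) - (\<integral>x. Ef u g 2 x \<partial>lborel) = (\<integral>x. Ef u g S x - Ef u g 2 x \<partial>lborel)"
    using intE[OF u supp S0] intE[OF u supp, of 2] by simp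
  also have "\<dots> = (\<integral>x. (\<integral>s. indicator {2..S} s * dEf u g s x \<partial>lborel) \<partial>lborel)"
    using ftc_s by simp
  also have "\<dots> = (\<integral>s. (\<integral>x. indicator {2..S} s * dEf u g s x \<partial>lborel) \<partial>lborel)"
    by (rule lborel_pair.Fubini_integral[OF jint_dE])
  also have "\<dots> \<le> (\<integral>s. (\<integral>x. indicator {2..S} s * hf u g s x \<partial>lborel) \<partial>lborel)"
  proof (rule integral_mono)
    show "integrable lborel (\<lambda>s. \<integral>x. indicator {2..S} s * dEf u g s x \<partial>lborel)"
      by (rule lborel_pair.integrable_fst[OF jint_dE])
    show "integrable lborel (\<lambda>s. \<integral>x. indicator {2..S} s * hf u g s x \<partial>lborel)"
      by (rule lborel_pair.integrable_fst[OF jint_hf])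
    fix s :: real
    show "(\<integral>x. indicator {2..S} s * dEf u g s x \<partial>lborel) \<le> (\<integral>x. indicator {2..S} s * hf u g s x \<partial>lborel)"
    proof (cases "s \<in> {2..S}")
      case True
      then have "0 < s" by auto
      then show ?thesis using True per_s[OF u supp _ g, of s] by simp
    qed simp
  qed
  finally show ?thesis .
qed

end

lemma alg_L:
  fixes T S y1 y2 a b1 b2 :: real
  assumes T: "T > 0" and S: "S\<^sup>2 = T\<^sup>2 - y1\<^sup>2 - y2\<^sup>2"
  shows "(S/T)\<^sup>2 * (a\<^sup>2 + b1\<^sup>2 + b2\<^sup>2) \<le> 2 * (a\<^sup>2 + b1\<^sup>2 + b2\<^sup>2 + 2 * ((y1/T) * b1 * a + (y2/T) * b2 * a))"
proof -
  have "2 * (a\<^sup>2 + b1\<^sup>2 + b2\<^sup>2 + 2 * ((y1/T) * b1 * a + (y2/T) * b2 * a)) - (S/T)\<^sup>2 * (a\<^sup>2 + b1\<^sup>2 + b2\<^sup>2)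
     = ((T*b1 + y1*a)\<^sup>2 + (T*b2 + y2*a)\<^sup>2 + (y1*b1 + y2*b2 + T*a)\<^sup>2 + (y1*b2 - y2*b1)\<^sup>2) / T\<^sup>2"
    using T unfolding power_divide S by (simp add: field_simps power2_eq_square)
  also have "\<dots> \<ge> 0" by simp
  finally show ?thesis by simp
qed

definition Lf :: "(real \<Rightarrow> real \<times> real \<Rightarrow> real) \<Rightarrow> real \<Rightarrow> real \<Rightarrow> real \<times> real \<Rightarrow> real" where
  "Lf u g s x = Wf g s x * (s / hyp_t s x)\<^sup>2 * ((Af u 0 s x)\<^sup>2 + (Af u 1 s x)\<^sup>2 + (Af u 2 s x)\<^sup>2)"

lemma dens_bounds:
  assumes "s > 0"
  shows "(s / hyp_t s x)\<^sup>2 * ((Af u 0 s x)\<^sup>2 + (Af u 1 s x)\<^sup>2 + (Af u 2 s x)\<^sup>2) \<le> 2 * densf u s x"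
proof -
  have T: "hyp_t s x > 0" using hyp_pos[of s x] assms by simp
  have S: "s\<^sup>2 = (hyp_t s x)\<^sup>2 - (fst x)\<^sup>2 - (snd x)\<^sup>2" using hyp_sq[of s x] normsq[of x] by simp
  show ?thesis unfolding densf_def by (rule alg_L[OF T S])
qed

lemma dens_nonneg: "s > 0 \<Longrightarrow> densf u s x \<ge> 0"
  using dens_bounds[of s x u] by (smt (verit) zero_le_power2 mult_nonneg_nonneg)

lemma Wf_nonneg: "Wf g s x \<ge> 0" unfolding Wf_def by simp

lemma L_le: "s > 0 \<Longrightarrow> Lf u g s x \<le> 4 * Ef u g s x"
proof -
  assume s: "s > 0"
  have "Lf u g s x = Wf g s x * ((s / hyp_t s x)\<^sup>2 * ((Af u 0 s x)\<^sup>2 + (Af u 1 s x)\<^sup>2 + (Af u 2 s x)\<^sup>2))"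
    unfolding Lf_def by (simp add: mult.assoc)
  also have "\<dots> \<le> Wf g s x * (2 * densf u s x)"
    by (rule mult_left_mono[OF dens_bounds[OF s] Wf_nonneg])
  also have "\<dots> = 4 * Ef u g s x" unfolding Ef_def by simp
  finally show ?thesis .
qed

lemma E2_le:
  assumes u: "C2_reg u" and supp: "\<forall>t x. norm x > t - 1 \<longrightarrow> u t x = 0" and g: "g \<ge> 0"
  shows "Ef u g 2 x \<le> densf u 2 x / 2"
proof (cases "norm x > hyp_t 2 x - 1")
  case True
  have "Af u i 2 x = 0" if "i < 3" for i
    unfolding Af_def by (rule pd_vanish[OF C2_C1[OF u] supp True that])
  then show ?thesis unfolding Ef_def densf_def by simp
next
  case False
  then have z: "1 \<le> hyp_t 2 x - norm x" by simp
  have "Wf g 2 x \<le> 1 powr (-g)" unfolding Wf_def by (rule powr_mono2') (use g z in auto)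
  then have W: "Wf g 2 x \<le> 1" by simp
  have "Wf g 2 x * densf u 2 x \<le> 1 * densf u 2 x"
    by (rule mult_right_mono[OF W dens_nonneg]) simp
  then show ?thesis unfolding Ef_def by simp
qed

lemma intL:
  assumes u: "C2_reg u" and supp: "\<forall>t x. norm x > t - 1 \<longrightarrow> u t x = 0" and s: "s > 0"
  shows "integrable lborel (Lf u g s)"
proof (rule int_gen[OF u supp s])
  have sn: "s \<noteq> 0" using s by simp
  show "continuous_on UNIV (Lf u g s)" unfolding Lf_def
    by (intro continuous_intros cWf cT cAf[OF C2_C1[OF u]] continuous_on_const continuous_on_id)
       (auto simp: sn hypT_ne[of UNIV "\<lambda>_. s"])
  show "\<And>x. s\<^sup>2 < norm x \<Longrightarrow> Lf u g s x = 0"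
    unfolding Lf_def using Af_vanish[OF C2_C1[OF u] supp s order_refl] by simp
qed


lemma grad_sq3: "grad_sq u t x = (pd 0 u t x)\<^sup>2 + (pd 1 u t x)\<^sup>2 + (pd 2 u t x)\<^sup>2"
  unfolding grad_sq_def by (simp add: numeral_3_eq_3 numeral_2_eq_2 lessThan_Suc)

theorem proposition3p2:
  fixes u f :: "real \<Rightarrow> real \<times> real \<Rightarrow> real" and \<gamma> s :: real
  assumes "\<gamma> > 0" and "s \<ge> 2"
    and "C2_reg u"
    and "\<forall>t x. norm x > t - 1 \<longrightarrow> u t x = 0"
    and "\<forall>t x. (t, x) \<in> K_region 2 s \<longrightarrow> - wave_box u t x = f t x"
  shows "(\<integral>x. (let t = hyp_t s x in
            (t - norm x) powr (-\<gamma>) * (s / t)\<^sup>2 * grad_sq u t x) \<partial>lborel)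
         \<le> 2 * energy 2 u
           + 4 * (LBINT s'=2..s. (\<integral>x. (let t = hyp_t s' x in
                (s' / t) * (t - norm x) powr (-\<gamma>) * f t x * pd 0 u t x) \<partial>lborel))"
proof -
  note u = assms(3) and supp = assms(4) and S = assms(2) and fw = assms(5)
  have g: "\<gamma> \<ge> 0" using assms(1) by simp
  have s0: "s > 0" using S by simp
  define J where "J = (\<integral>s'. (\<integral>x. indicator {2..s} s' * hf u \<gamma> s' x \<partial>lborel) \<partial>lborel)"
  have L: "(\<integral>x. (let t = hyp_t s x in (t - norm x) powr (-\<gamma>) * (s / t)\<^sup>2 * grad_sq u t x) \<partial>lborel)
      = (\<integral>x. Lf u \<gamma> s x \<partial>lborel)"
  proof -
    have "(\<lambda>x. (let t = hyp_t s x in (t - norm x) powr (-\<gamma>) * (s / t)\<^sup>2 * grad_sq u t x)) = Lf u \<gamma> s"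
      by (rule ext) (simp add: Let_def Lf_def Wf_def Af_def grad_sq3)
    then show ?thesis by simp
  qed
  have "(\<integral>x. Lf u \<gamma> s x \<partial>lborel) \<le> (\<integral>x. 4 * Ef u \<gamma> s x \<partial>lborel)"
    by (rule integral_mono[OF intL[OF u supp s0]]) (use intE[OF u supp s0] L_le[OF s0] in auto)
  also have "\<dots> = 4 * (\<integral>x. Ef u \<gamma> s x \<partial>lborel)" by simp
  also have "(\<integral>x. Ef u \<gamma> s x \<partial>lborel) \<le> (\<integral>x. Ef u \<gamma> 2 x \<partial>lborel) + J"
    using main_ineq[OF u supp S g] unfolding J_def by simp
  also have "(\<integral>x. Ef u \<gamma> 2 x \<partial>lborel) \<le> (\<integral>x. densf u 2 x / 2 \<partial>lborel)"
    by (rule integral_mono[OF intE[OF u supp]]) (use intdens[OF u supp, of 2] E2_le[OF u supp g] in auto)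
  also have "(\<integral>x. densf u 2 x / 2 \<partial>lborel) = energy 2 u / 2"
    unfolding energy_def by (simp add: densf_def Af_def Let_def)
  also have "J = (LBINT s'=2..s. (\<integral>x. (let t = hyp_t s' x in
                (s' / t) * (t - norm x) powr (-\<gamma>) * f t x * pd 0 u t x) \<partial>lborel))"
  proof -
    have eq: "(\<integral>x. (let t = hyp_t s' x in (s' / t) * (t - norm x) powr (-\<gamma>) * f t x * pd 0 u t x) \<partial>lborel)
       = (\<integral>x. hf u \<gamma> s' x \<partial>lborel)" if s': "2 \<le> s'" "s' \<le> s" for s'
    proof -
     have "(\<lambda>x. (let t = hyp_t s' x in (s' / t) * (t - norm x) powr (-\<gamma>) * f t x * pd 0 u t x)) = hf u \<gamma> s'"
     proof (rule ext)
      fix x :: "real \<times> real"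
      let ?T = "hyp_t s' x"
      show "(let t = ?T in (s' / t) * (t - norm x) powr (-\<gamma>) * f t x * pd 0 u t x) = hf u \<gamma> s' x"
      proof (cases "pd 0 u ?T x = 0")
        case True
        then show ?thesis by (simp add: hf_def Af_def Let_def)
      next
        case False
        have nx: "norm x \<le> ?T - 1"
        proof (rule ccontr)
          assume "\<not> norm x \<le> ?T - 1"
          then have "pd 0 u ?T x = 0" by (intro pd_vanish[OF C2_C1[OF u] supp]) auto
          then show False using False by simp
        qed
        have sq: "?T\<^sup>2 - (norm x)\<^sup>2 = s'\<^sup>2" using hyp_sq[of s' x] by simp
        have "(2::real)\<^sup>2 \<le> s'\<^sup>2" using s' by (intro power_mono) auto
        moreover have "s'\<^sup>2 \<le> s\<^sup>2" using s' by (intro power_mono) auto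
        ultimately have "(?T, x) \<in> K_region 2 s" unfolding K_region_def using sq nx by simp
        then have "f ?T x = - wave_box u ?T x" using fw by metis
        then have fe: "f ?T x = pd 0 (pd 0 u) ?T x - pd 1 (pd 1 u) ?T x - pd 2 (pd 2 u) ?T x"
          by (simp add: wave_box_def)
        show ?thesis unfolding hf_def Af_def Bf_def Wf_def Let_def fe by (simp only: mult_ac)
      qed
     qed
     then show ?thesis by simp
    qed
    have "(LBINT s'=2..s. (\<integral>x. (let t = hyp_t s' x in
                (s' / t) * (t - norm x) powr (-\<gamma>) * f t x * pd 0 u t x) \<partial>lborel))
       = (LBINT s' : {2..s}. (\<integral>x. (let t = hyp_t s' x in
                (s' / t) * (t - norm x) powr (-\<gamma>) * f t x * pd 0 u t x) \<partial>lborel))"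
      using interval_integral_Icc[OF S, of "\<lambda>s'. (\<integral>x. (let t = hyp_t s' x in
                (s' / t) * (t - norm x) powr (-\<gamma>) * f t x * pd 0 u t x) \<partial>lborel)"] by simp
    also have "\<dots> = J" unfolding set_lebesgue_integral_def J_def
    proof (rule Bochner_Integration.integral_cong[OF refl])
      fix s' :: real
      show "indicator {2..s} s' *\<^sub>R (\<integral>x. (let t = hyp_t s' x in
                (s' / t) * (t - norm x) powr (-\<gamma>) * f t x * pd 0 u t x) \<partial>lborel)
          = (\<integral>x. indicator {2..s} s' * hf u \<gamma> s' x \<partial>lborel)"
      proof (cases "s' \<in> {2..s}")
        case True
        then have e: "(\<integral>x. (let t = hyp_t s' x in
                (s' / t) * (t - norm x) powr (-\<gamma>) * f t x * pd 0 u t x) \<partial>lborel) = (\<integral>x. hf u \<gamma> s' x \<partial>lborel)"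
          by (intro eq) auto
        show ?thesis using True e by simp
      qed simp
    qed
    finally show ?thesis by simp
  qed
  finally show ?thesis using L by simp
qed


end
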